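(* For all integers $n \ge 3$ and $0 \le m \le n-1$ we have $\widehat{C}_{n,m} > 1$.
   Context: $\mathcal{K}_k^n = \{\prod_{s=1}^n [\frac{i_s-1}{k}, \frac{i_s}{k}] : i_s \in \{1,\dots,k\}\}$ (cubes dividing $I^n=[0,1]^n$); $\dim$ is topological dimension; a set $S\subset I^n$ connects some opposite faces of $I^n$ if it is connected and meets both $\{z_i=0\}$ and $\{z_i=1\}$ for some $i$; $\mathbb{Z}^{n-1}$ has the $\ell^\infty$ norm; $P\subset\mathbb{Z}^{n-1}$ is $1$-connected if any two points are joined by a finite chain in $P$ with consecutive $\ell^\infty$-distances $\le 1$. $\widehat{C}_{n,m}$ is the least constant $C>0$ such that: for every $k\in\mathbb{N}$ and every $F\colon\mathcal{K}_k^n\to\mathbb{Z}^{n-1}$ with $\|F(K_1)-F(K_2)\|_\infty\le 1$ whenever $\dim(K_1\cap K_2)\ge m$, there exist a $1$-connected $P\subset\mathbb{Z}^{n-1}$ with $|P|\le C$ and $\mathcal{S}\subset F^{-1}[P]$ with $\bigcup\mathcal{S}$ connecting some opposite faces of $I^n$. *)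

theory Defs
  imports "HOL-Analysis.Analysis"
begin

text \<open>Ambient dimension n = CARD('n); points of I^n are vectors of type real^'n.
  Points of Z^(n-1) are functions nat => int vanishing from index n-1 on.\<close>

definition cube :: "nat \<Rightarrow> ('n::finite \<Rightarrow> nat) \<Rightarrow> (real^'n) set" where
  "cube k i = {z. \<forall>s. real (i s - 1) / real k \<le> z $ s \<and> z $ s \<le> real (i s) / real k}"

definition cubes :: "nat \<Rightarrow> (real^'n::finite) set set" where
  "cubes k = {cube k i | i. \<forall>s. 1 \<le> i s \<and> i s \<le> k}"

definition lattice_pts :: "nat \<Rightarrow> (nat \<Rightarrow> int) set" where
  "lattice_pts d = {p. \<forall>s\<ge>d. p s = 0}"

definition linf_norm :: "nat \<Rightarrow> (nat \<Rightarrow> int) \<Rightarrow> int" where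
  "linf_norm d p = (if d = 0 then 0 else Max ((\<lambda>s. \<bar>p s\<bar>) ` {..<d}))"

definition one_connected :: "nat \<Rightarrow> (nat \<Rightarrow> int) set \<Rightarrow> bool" where
  "one_connected d P \<longleftrightarrow> (\<forall>p\<in>P. \<forall>q\<in>P. \<exists>xs. xs \<noteq> [] \<and> hd xs = p \<and> last xs = q \<and>
      set xs \<subseteq> P \<and> (\<forall>j < length xs - 1. linf_norm d (\<lambda>s. (xs ! j) s - (xs ! Suc j) s) \<le> 1))"

definition connects_opposite_faces :: "(real^'n::finite) set \<Rightarrow> bool" where
  "connects_opposite_faces S \<longleftrightarrow> connected S \<and>
     (\<exists>i. (\<exists>z\<in>S. z $ i = 0) \<and> (\<exists>z\<in>S. z $ i = 1))"

text \<open>Topological dimension of K1 \<inter> K2: the intersection of two grid cubes is a convex set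
  (a common face or empty), whose topological dimension equals its affine dimension.\<close>

definition admissible_const :: "'n::finite itself \<Rightarrow> nat \<Rightarrow> real \<Rightarrow> bool" where
  "admissible_const _ m C \<longleftrightarrow> C > 0 \<and>
    (\<forall>k::nat. k \<ge> 1 \<longrightarrow> (\<forall>F :: (real^'n) set \<Rightarrow> (nat \<Rightarrow> int).
       (\<forall>K\<in>cubes k. F K \<in> lattice_pts (CARD('n) - 1)) \<longrightarrow>
       (\<forall>K1\<in>cubes k. \<forall>K2\<in>cubes k. aff_dim (K1 \<inter> K2) \<ge> int m \<longrightarrow>
            linf_norm (CARD('n) - 1) (\<lambda>s. F K1 s - F K2 s) \<le> 1) \<longrightarrow>
       (\<exists>P \<subseteq> lattice_pts (CARD('n) - 1). one_connected (CARD('n) - 1) P \<and> finite P \<and>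
          real (card P) \<le> C \<and>
          (\<exists>\<S> \<subseteq> {K \<in> cubes k. F K \<in> P}. connects_opposite_faces (\<Union>\<S>)))))"

definition C_hat :: "'n::finite itself \<Rightarrow> nat \<Rightarrow> ereal" where
  "C_hat n m = Inf {ereal C | C. admissible_const n m C}"

end

theory Submission
  imports Defs
begin

definition colt :: "nat list" where "colt = [0, 0, 1, 0, 0, 1, 1, 2, 2, 0, 0, 2, 0, 0, 3, 1, 3, 2, 1, 1, 2, 2, 3, 3, 2, 3, 1]"
definition clt :: "nat list" where "clt = [0, 0, 1, 0, 0, 1, 2, 3, 3, 0, 0, 4, 0, 0, 5, 2, 5, 3, 6, 6, 4, 7, 5, 5, 7, 5, 8]"
definition col3 :: "nat \<Rightarrow> nat \<Rightarrow> nat \<Rightarrow> nat" where "col3 x y z = colt ! ((x-1)*9+(y-1)*3+(z-1))"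
definition cl3 :: "nat \<Rightarrow> nat \<Rightarrow> nat \<Rightarrow> nat" where "cl3 x y z = clt ! ((x-1)*9+(y-1)*3+(z-1))"
definition nb :: "nat \<Rightarrow> nat \<Rightarrow> bool" where "nb a b \<longleftrightarrow> a \<le> b + 1 \<and> b \<le> a + 1"

lemma chk1: "\<forall>x\<in>{1,2,3}. \<forall>y\<in>{1,2,3}. \<forall>z\<in>{1,2,3}. \<forall>x'\<in>{1,2,3}. \<forall>y'\<in>{1,2,3}. \<forall>z'\<in>{1,2,3}.
  col3 x y z = col3 x' y' z' \<and> nb x x' \<and> nb y y' \<and> nb z z' \<longrightarrow> cl3 x y z = cl3 x' y' z'"
  by (simp add: col3_def cl3_def colt_def clt_def nb_def)

lemma chk2: "\<forall>x\<in>{1,2,3}. \<forall>y\<in>{1,2,3}. \<forall>z\<in>{1,2,3}. \<forall>x'\<in>{1,2,3}. \<forall>y'\<in>{1,2,3}. \<forall>z'\<in>{1,2,3}.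
  cl3 x y z = cl3 x' y' z' \<longrightarrow> nb x x' \<and> nb y y' \<and> nb z z'"
  by (simp add: col3_def cl3_def colt_def clt_def nb_def)

lemma chk3: "\<forall>x\<in>{1,2,3}. \<forall>y\<in>{1,2,3}. \<forall>z\<in>{1,2,3}. col3 x y z \<le> 3"
  by (simp add: col3_def colt_def)

lemma cube_disj_nb:
  assumes "z \<in> cube k i" "z \<in> cube k j" "k \<ge> 1" "1 \<le> i s"
  shows "i s \<le> j s + 1"
proof -
  have "real (i s - 1) / k \<le> z$s" "z$s \<le> real (j s)/k" using assms unfolding cube_def mem_Collect_eq by blast+
  hence "real (i s - 1) / k \<le> real (j s) / k" by linarith
  hence "real (i s - 1) \<le> real (j s)" using assms(3) by (simp add: divide_le_cancel)
  thus ?thesis by simp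
qed

lemma cube_face0:
  assumes "z \<in> cube k i" "z$s = 0" "k \<ge> 1"
  shows "i s \<le> 1"
proof -
  have "real (i s - 1) / k \<le> z$s" using assms unfolding cube_def mem_Collect_eq by blast
  hence "real (i s - 1) / k \<le> 0" using assms by simp
  hence "real (i s - 1) \<le> 0" using assms(3)
    by (simp add: divide_le_0_iff)
  thus ?thesis by simp
qed

lemma cube_face1:
  assumes "z \<in> cube k i" "z$s = 1" "k \<ge> 1"
  shows "i s \<ge> k"
proof -
  have "z$s \<le> real (i s) / k" using assms unfolding cube_def mem_Collect_eq by blast
  hence "1 \<le> real (i s) / k" using assms by simp
  hence "real k \<le> real (i s)" using assms(3)
    by (simp add: le_divide_eq)
  thus ?thesis by simp
qed

lemma closed_cube: "closed (cube k i :: (real^'n::finite) set)"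
proof -
  have "cube k i = (\<Inter>s. {z::real^'n. real (i s - 1) / real k \<le> z $ s} \<inter> {z. z $ s \<le> real (i s) / real k})"
    by (auto simp: cube_def)
  moreover have "closed (\<Inter>s. {z::real^'n. real (i s - 1) / real k \<le> z $ s} \<inter> {z. z $ s \<le> real (i s) / real k})"
    by (intro closed_INT ballI closed_Int closed_Collect_le continuous_intros)
  ultimately show ?thesis by simp
qed

lemma finite_cubes: "finite (cubes k :: (real^'n::finite) set set)"
proof -
  have "cubes k = (\<lambda>i. cube k i :: (real^'n) set) ` (Pi UNIV (\<lambda>_. {1..k}))"
    by (auto simp: cubes_def Pi_def)
  moreover have "finite (Pi (UNIV::'n set) (\<lambda>_. {1..k}))"
  proof -
    have "finite (PiE (UNIV::'n set) (\<lambda>_. {1..k}))" by (intro finite_PiE) auto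
    thus ?thesis by (simp add: PiE_UNIV_domain)
  qed
  ultimately show ?thesis by simp
qed

theorem proposition5p3:
  assumes "CARD('n::finite) \<ge> 3" and "m \<le> CARD('n) - 1"
  shows "C_hat TYPE('n) m > 1"
proof -
  define N where "N = CARD('n)"
  have N3: "N \<ge> 3" using assms N_def by simp
  obtain e :: "'n \<Rightarrow> nat" where e: "bij_betw e UNIV {0..<N}"
    using ex_bij_betw_finite_nat[of "UNIV::'n set"] N_def by auto
  define h where "h = inv_into UNIV e"
  have he: "h (e t) = t" for t
    using e unfolding h_def by (meson bij_betw_imp_inj_on inv_into_f_f iso_tuple_UNIV_I)
  have eN: "e t < N" for t using e bij_betwE by fastforce
  have eh: "j < N \<Longrightarrow> e (h j) = j" for j
    using e unfolding h_def by (metis atLeastLessThan_iff bij_betw_def f_inv_into_f zero_le)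
  define idx where "idx K = (SOME i. (\<forall>s. 1 \<le> i s \<and> i s \<le> (3::nat)) \<and> K = cube 3 i)"
    for K :: "(real^'n) set"
  have idx: "(\<forall>s. 1 \<le> idx K s \<and> idx K s \<le> 3) \<and> K = cube 3 (idx K)" if "K \<in> cubes 3" for K
  proof -
    have "\<exists>i. (\<forall>s. 1 \<le> i s \<and> i s \<le> (3::nat)) \<and> K = cube 3 i" using that by (auto simp: cubes_def)
    thus ?thesis unfolding idx_def by (rule someI_ex)
  qed
  define c where "c i = col3 (i (h 0)) (i (h 1)) (i (h 2))" for i :: "'n \<Rightarrow> nat"
  define cl where "cl i = cl3 (i (h 0)) (i (h 1)) (i (h 2))" for i :: "'n \<Rightarrow> nat"
  define F where "F K = (\<lambda>j. if j = 0 then int (c (idx K) mod 2) else if j = 1 then int (c (idx K) div 2)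
      else if j < N - 1 then (if idx K (h (j+1)) \<ge> 2 then 1 else 0) else (0::int))"
    for K :: "(real^'n) set"
  have in123: "v \<in> {1,2,3}" if "1 \<le> v" "v \<le> (3::nat)" for v using that by auto
  have c3: "c (idx K) \<le> 3" if "K \<in> cubes 3" for K
    using chk3 idx[OF that] in123 unfolding c_def by blast
  have F01: "F K j \<in> {0,1}" if "K \<in> cubes 3" for K j
    using c3[OF that] by (auto simp: F_def)
  have lip: "linf_norm (N-1) (\<lambda>s. F K1 s - F K2 s) \<le> 1" if "K1 \<in> cubes 3" "K2 \<in> cubes 3" for K1 K2
  proof -
    have "\<bar>F K1 s - F K2 s\<bar> \<le> 1" for s using F01[OF that(1), of s] F01[OF that(2), of s] by auto
    moreover have "N - 1 \<noteq> 0" using N3 by simp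
    have "(0::nat) \<in> {..<N-1}" using N3 by simp
    hence ne: "{..<N-1} \<noteq> {}" by blast
    have "(MAX s\<in>{..<N-1}. \<bar>F K1 s - F K2 s\<bar>) \<le> 1"
      using ne \<open>\<And>s. \<bar>F K1 s - F K2 s\<bar> \<le> 1\<close> by (simp add: Max_le_iff)
    thus ?thesis using \<open>N - 1 \<noteq> 0\<close> by (simp add: linf_norm_def)
  qed
  have lat: "F K \<in> lattice_pts (N-1)" for K
    using N3 by (auto simp: lattice_pts_def F_def)
  have key: False if S: "S \<subseteq> {K\<in>cubes 3. F K = p}" and conn: "connects_opposite_faces (\<Union>S)" for S p
  proof -
    from conn obtain a z w where cn: "connected (\<Union>S)" and z: "z \<in> \<Union>S" "z$a = 0"
      and w: "w \<in> \<Union>S" "w$a = 1"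
      unfolding connects_opposite_faces_def by blast
    obtain K1 where K1: "K1 \<in> S" "z \<in> K1" using z by blast
    obtain K2 where K2: "K2 \<in> S" "w \<in> K2" using w by blast
    have "S \<subseteq> cubes 3" using S by blast
    hence fin: "finite S" using finite_cubes by (rule finite_subset)
    have valid: "(\<forall>s. 1 \<le> idx K s \<and> idx K s \<le> 3) \<and> K = cube 3 (idx K)" if "K \<in> S" for K
      using idx S that by blast
    have Fp: "F K = p" if "K \<in> S" for K using S that by blast
    have ccol: "c (idx K) = c (idx K')" if "K \<in> S" "K' \<in> S" for K K'
    proof -
      have "F K 0 = F K' 0" "F K 1 = F K' 1" using Fp that by auto
      hence "c (idx K) mod 2 = c (idx K') mod 2" "c (idx K) div 2 = c (idx K') div 2"
        by (auto simp: F_def)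
      thus ?thesis by (metis div_mult_mod_eq)
    qed
    have nbK: "nb (idx K s) (idx K' s)" if "K \<in> S" "K' \<in> S" "x \<in> K" "x \<in> K'" for K K' x s
      using cube_disj_nb[of x 3 "idx K" "idx K'" s] cube_disj_nb[of x 3 "idx K'" "idx K" s]
        valid[OF that(1)] valid[OF that(2)] that unfolding nb_def by auto
    have cl_eq: "cl (idx K) = cl (idx K')" if "K \<in> S" "K' \<in> S" "x \<in> K" "x \<in> K'" for K K' x
    proof -
      have "col3 (idx K (h 0)) (idx K (h 1)) (idx K (h 2)) = col3 (idx K' (h 0)) (idx K' (h 1)) (idx K' (h 2))"
        using ccol[OF that(1,2)] unfolding c_def .
      moreover have "nb (idx K (h 0)) (idx K' (h 0))" "nb (idx K (h 1)) (idx K' (h 1))" "nb (idx K (h 2)) (idx K' (h 2))"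
        using nbK[OF that] by auto
      moreover have "idx K (h q) \<in> {1,2,3}" "idx K' (h q) \<in> {1,2,3}" for q
        using valid[OF that(1)] valid[OF that(2)] in123 by blast+
      ultimately show ?thesis using chk1 unfolding cl_def by blast
    qed
    have cl_nb: "nb (idx K (h q)) (idx K' (h q))" if "K \<in> S" "K' \<in> S" "cl (idx K) = cl (idx K')" "q \<in> {0,1,2}" for K K' q
    proof -
      have "idx K (h q) \<in> {1,2,3}" "idx K' (h q) \<in> {1,2,3}" for q
        using valid[OF that(1)] valid[OF that(2)] in123 by blast+
      hence "nb (idx K (h 0)) (idx K' (h 0)) \<and> nb (idx K (h 1)) (idx K' (h 1)) \<and> nb (idx K (h 2)) (idx K' (h 2))"
        using chk2 that(3) unfolding cl_def by blast
      thus ?thesis using that(4) by auto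
    qed
    define A where "A = \<Union>{K\<in>S. cl (idx K) = cl (idx K1)}"
    define B where "B = \<Union>{K\<in>S. cl (idx K) \<noteq> cl (idx K1)}"
    have clK: "closed K" if "K \<in> S" for K using valid[OF that] closed_cube by metis
    have clA: "closed A" unfolding A_def using fin clK
      by (intro closed_Union) auto
    have clB: "closed B" unfolding B_def using fin clK
      by (intro closed_Union) auto
    have cov: "\<Union>S \<subseteq> A \<union> B" unfolding A_def B_def by blast
    have dis: "A \<inter> B \<inter> \<Union>S = {}"
    proof -
      have "A \<inter> B = {}"
      proof (rule ccontr)
        assume "A \<inter> B \<noteq> {}"
        then obtain x where "x \<in> A" "x \<in> B" by blast
        then obtain K K' where "K \<in> S" "x \<in> K" "cl (idx K) = cl (idx K1)"
          "K' \<in> S" "x \<in> K'" "cl (idx K') \<noteq> cl (idx K1)"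
          unfolding A_def B_def by blast
        thus False using cl_eq[of K K' x] by simp
      qed
      thus ?thesis by blast
    qed
    have "A \<inter> \<Union>S \<noteq> {}" using K1 z unfolding A_def by blast
    hence Bempty: "B \<inter> \<Union>S = {}" using connected_closedD[OF cn dis cov clA clB] by blast
    have wB: "w \<in> B" if "cl (idx K2) \<noteq> cl (idx K1)"
    proof -
      have "K2 \<in> {K\<in>S. cl (idx K) \<noteq> cl (idx K1)}" using K2(1) that by simp
      thus ?thesis unfolding B_def using K2(2) by (rule UnionI)
    qed
    have cl12: "cl (idx K1) = cl (idx K2)"
    proof (rule ccontr)
      assume "cl (idx K1) \<noteq> cl (idx K2)"
      hence "w \<in> B \<inter> \<Union>S" using wB w(1) by simp
      thus False using Bempty by simp
    qed
    have i1: "idx K1 a \<le> 1" using cube_face0[of z 3 "idx K1" a] valid[OF K1(1)] K1 z by auto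
    have i2: "idx K2 a \<ge> 3" using cube_face1[of w 3 "idx K2" a] valid[OF K2(1)] K2 w by auto
    show False
    proof (cases "e a \<in> {0,1,2}")
      case True
      then obtain q where q: "q \<in> {0,1,2}" "h q = a" using he by blast
      show False using cl_nb[OF K1(1) K2(1) cl12 q(1)] q i1 i2 unfolding nb_def by auto
    next
      case False
      define j where "j = e a - 1"
      have j: "j \<noteq> 0" "j \<noteq> 1" "j < N - 1" "h (j+1) = a"
        using False eN[of a] he[of a] unfolding j_def by auto
      have "F K1 j = F K2 j" using Fp K1 K2 by auto
      thus False using j i1 i2 unfolding F_def by auto
    qed
  qed
  have adm: "2 \<le> C" if "admissible_const TYPE('n) m C" for C
  proof -
    note H = conjunct2[OF that[unfolded admissible_const_def]]
    have three: "(3::nat) \<ge> 1" by simp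
    note H3 = mp[OF spec[OF H, of 3] three]
    have L1: "\<forall>K\<in>cubes 3. F K \<in> lattice_pts (CARD('n) - 1)" using lat N_def by simp
    have L2: "\<forall>K1\<in>cubes 3. \<forall>K2\<in>cubes 3. aff_dim (K1 \<inter> K2) \<ge> int m \<longrightarrow>
            linf_norm (CARD('n) - 1) (\<lambda>s. F K1 s - F K2 s) \<le> 1" using lip N_def by simp
    from mp[OF mp[OF spec[OF H3, of F] L1] L2] obtain P S where
      P: "finite P" "real (card P) \<le> C" and S: "S \<subseteq> {K \<in> cubes 3. F K \<in> P}"
      and co: "connects_opposite_faces (\<Union>S)"
      unfolding N_def by blast
    show ?thesis
    proof (rule ccontr)
      assume "\<not> 2 \<le> C"
      hence "card P \<le> 1" using P by linarith
      hence P1: "\<forall>x\<in>P. \<forall>y\<in>P. x = y" using P(1) card_le_Suc0_iff_eq by auto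
      from co obtain z where "z \<in> \<Union>S" unfolding connects_opposite_faces_def by blast
      then obtain K0 where "K0 \<in> S" by blast
      hence "F K0 \<in> P" using S by blast
      hence "S \<subseteq> {K \<in> cubes 3. F K = F K0}" using S P1 by blast
      thus False using key co by blast
    qed
  qed
  have "ereal 2 \<le> C_hat TYPE('n) m"
    unfolding C_hat_def by (rule Inf_greatest) (auto dest: adm)
  moreover have "(1::ereal) < ereal 2" by (simp add: one_ereal_def)
  ultimately show ?thesis by (rule order.strict_trans2[rotated])
qed

end
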